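(* Let $\kappa\in\mathbb C$ with $\Re\kappa>0,\Im\kappa>0$, and let $R^\kappa_{12},R^\kappa_{21}$ be the entries of $\mathcal R_\kappa$ (context). There exists $c_1>0$ such that for all $\bm\varphi\in\bm H^{-1/2}$ and $\bm g\in\bm H^{1/2}$: $$-\Re\langle R^\kappa_{12}\bm\varphi,\overline{\bm\varphi}\rangle\ge c_1\|\bm\varphi\|^2_{\bm H^{-1/2}},\quad -\Re\langle R^\kappa_{21}\bm g,\overline{\bm g}\rangle\ge c_1\|\bm g\|^2_{\bm H^{1/2}},$$ $$-\Im\langle R^\kappa_{12}\bm\varphi,\overline{\bm\varphi}\rangle\ge c_1\|\bm\varphi\|^2_{\bm H^{-3/2}},\quad \Im\langle R^\kappa_{21}\bm g,\overline{\bm g}\rangle\ge c_1\|\bm g\|^2_{\bm H^{-1/2}}.$$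
   Context: For $s\in\mathbb R$, $H^s$ is the space of $2\pi$-periodic distributions $\varphi=\sum_{n\in\mathbb Z}\hat\varphi(n)e^{int}$ with $\|\varphi\|_s^2:=|\hat\varphi(0)|^2+\sum_{n\ne0}|n|^{2s}|\hat\varphi(n)|^2<\infty$; $\bm H^s=H^s\times H^s$. $\langle\bm g,\bm\varphi\rangle=\int_0^{2\pi}\bm g\cdot\bm\varphi\,dt$ (bilinear, extended by duality), overline = conjugation. Multipliers: $\mathrm H$ has symbol $1$ for $n\ge0$, $-1$ for $n<0$; $\Lambda_\kappa$ has symbol $(n^2-\kappa^2)^{-1/2}$ (principal branch), $\Lambda_\kappa^{-1}$ its inverse; $\bm\Lambda_\kappa=\mathrm{diag}(\Lambda_\kappa,\Lambda_\kappa)$, $\bm\Lambda_\kappa^{-1}=\mathrm{diag}(\Lambda_\kappa^{-1},\Lambda_\kappa^{-1})$, $\bm H(g_1,g_2)=(-\mathrm Hg_2,\mathrm Hg_1)$, $\bm I$ identity. Two materials with Lamé parameters $\mu_\pm>0$, $\lambda_\pm>-\mu_\pm$; $\alpha_\pm:=\frac{i\mu_\pm}{2(\lambda_\pm+2\mu_\pm)}$, $\beta_\pm:=\frac{\lambda_\pm+3\mu_\pm}{4\mu_\pm(\lambda_\pm+2\mu_\pm)}$, $\delta_\pm:=-\frac{\mu_\pm(\lambda_\pm+\mu_\pm)}{\lambda_\pm+2\mu_\pm}$, $\rho:=-(\beta_++\beta_-)(\delta_++\delta_-)-(\alpha_++\alpha_-)^2$. $\mathcal C^\kappa_\pm:=\begin{bmatrix}\alpha_\pm\bm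 H&-\beta_\pm\bm\Lambda_\kappa\\\delta_\pm\bm\Lambda_\kappa^{-1}&-\alpha_\pm\bm H\end{bmatrix}$ and $\mathcal R_\kappa:=\rho^{-1}(\mathcal C^\kappa_++\mathcal C^\kappa_-)(\frac12\mathcal I+\mathcal C^\kappa_-)=\begin{bmatrix}R^\kappa_{11}&R^\kappa_{12}\\R^\kappa_{21}&R^\kappa_{22}\end{bmatrix}$; explicitly $R^\kappa_{12}=-\frac{\beta_++\beta_-}{\rho}\bm\Lambda_\kappa\big(\frac12\bm I+\frac{\alpha_+\beta_--\alpha_-\beta_+}{\beta_++\beta_-}\bm H\big)$ and $R^\kappa_{21}=\frac{\delta_++\delta_-}{\rho}\bm\Lambda_\kappa^{-1}\big(\frac12\bm I-\frac{\alpha_+\delta_--\alpha_-\delta_+}{\delta_++\delta_-}\bm H\big)$. *)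

theory Defs
  imports "HOL-Analysis.Analysis"
begin

text \<open>A 2pi-periodic distribution is represented by its Fourier coefficient
sequence; a vector field in (H^s)^2 by a pair of such sequences; an element of
(H^s)^2 x (H^s)^2 (the space on which the block operators act) by a pair of pairs.\<close>

type_synonym sq = "int \<Rightarrow> complex"
type_synonym vf = "sq \<times> sq"
type_synonym blk = "vf \<times> vf"

definition sob_weight :: "real \<Rightarrow> sq \<Rightarrow> int \<Rightarrow> real" where
  "sob_weight s f n = (if n = 0 then (cmod (f 0))\<^sup>2 else \<bar>real_of_int n\<bar> powr (2 * s) * (cmod (f n))\<^sup>2)"

definition inH :: "real \<Rightarrow> sq \<Rightarrow> bool" where
  "inH s f \<longleftrightarrow> sob_weight s f summable_on UNIV"

definition sob_norm2 :: "real \<Rightarrow> sq \<Rightarrow> real" where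
  "sob_norm2 s f = (\<Sum>\<^sub>\<infinity>n\<in>UNIV. sob_weight s f n)"

definition inHv :: "real \<Rightarrow> vf \<Rightarrow> bool" where
  "inHv s g \<longleftrightarrow> inH s (fst g) \<and> inH s (snd g)"

definition sob_vnorm2 :: "real \<Rightarrow> vf \<Rightarrow> real" where
  "sob_vnorm2 s g = sob_norm2 s (fst g) + sob_norm2 s (snd g)"

text \<open>\<open>\<langle>g,\<phi>\<rangle> = \<integral>_0^{2\<pi>} g\<cdot>\<phi> dt = 2\<pi> \<Sum>_n (\<hat>g_1(n)\<hat>\<phi>_1(-n) + \<hat>g_2(n)\<hat>\<phi>_2(-n))\<close>,
extended by duality.\<close>

definition pairing :: "vf \<Rightarrow> vf \<Rightarrow> complex" where
  "pairing g \<phi> = 2 * of_real pi *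
     (\<Sum>\<^sub>\<infinity>n\<in>UNIV. fst g n * fst \<phi> (-n) + snd g n * snd \<phi> (-n))"

text \<open>Complex conjugate of a distribution: its n-th coefficient is the conjugate of the (-n)-th.\<close>

definition vconj :: "vf \<Rightarrow> vf" where
  "vconj g = (\<lambda>n. cnj (fst g (-n)), \<lambda>n. cnj (snd g (-n)))"

definition Hs :: "sq \<Rightarrow> sq" where
  "Hs f = (\<lambda>n. (if n \<ge> 0 then 1 else -1) * f n)"

definition lam_sym :: "complex \<Rightarrow> int \<Rightarrow> complex" where
  "lam_sym \<kappa> n = ((of_int n)\<^sup>2 - \<kappa>\<^sup>2) powr (-1/2)"

definition Lam :: "complex \<Rightarrow> sq \<Rightarrow> sq" where
  "Lam \<kappa> f = (\<lambda>n. lam_sym \<kappa> n * f n)"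

definition LamInv :: "complex \<Rightarrow> sq \<Rightarrow> sq" where
  "LamInv \<kappa> f = (\<lambda>n. inverse (lam_sym \<kappa> n) * f n)"

definition vadd :: "vf \<Rightarrow> vf \<Rightarrow> vf" where
  "vadd v w = (\<lambda>n. fst v n + fst w n, \<lambda>n. snd v n + snd w n)"

definition vsmul :: "complex \<Rightarrow> vf \<Rightarrow> vf" where
  "vsmul c v = (\<lambda>n. c * fst v n, \<lambda>n. c * snd v n)"

definition vzero :: vf where
  "vzero = (\<lambda>n. 0, \<lambda>n. 0)"

definition vH :: "vf \<Rightarrow> vf" where
  "vH g = (\<lambda>n. - Hs (snd g) n, Hs (fst g))"

definition vLam :: "complex \<Rightarrow> vf \<Rightarrow> vf" where
  "vLam \<kappa> g = (Lam \<kappa> (fst g), Lam \<kappa> (snd g))"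

definition vLamInv :: "complex \<Rightarrow> vf \<Rightarrow> vf" where
  "vLamInv \<kappa> g = (LamInv \<kappa> (fst g), LamInv \<kappa> (snd g))"

definition badd :: "blk \<Rightarrow> blk \<Rightarrow> blk" where
  "badd X Y = (vadd (fst X) (fst Y), vadd (snd X) (snd Y))"

definition bsmul :: "complex \<Rightarrow> blk \<Rightarrow> blk" where
  "bsmul c X = (vsmul c (fst X), vsmul c (snd X))"

definition alpha :: "real \<Rightarrow> real \<Rightarrow> complex" where
  "alpha \<mu> la = \<i> * of_real \<mu> / (2 * of_real (la + 2 * \<mu>))"

definition beta :: "real \<Rightarrow> real \<Rightarrow> complex" where
  "beta \<mu> la = of_real ((la + 3 * \<mu>) / (4 * \<mu> * (la + 2 * \<mu>)))"

definition delta :: "real \<Rightarrow> real \<Rightarrow> complex" where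
  "delta \<mu> la = of_real (- (\<mu> * (la + \<mu>)) / (la + 2 * \<mu>))"

definition rho :: "real \<Rightarrow> real \<Rightarrow> real \<Rightarrow> real \<Rightarrow> complex" where
  "rho \<mu>p lp \<mu>m lm =
     - (beta \<mu>p lp + beta \<mu>m lm) * (delta \<mu>p lp + delta \<mu>m lm)
     - (alpha \<mu>p lp + alpha \<mu>m lm)\<^sup>2"

definition Cop :: "real \<Rightarrow> real \<Rightarrow> complex \<Rightarrow> blk \<Rightarrow> blk" where
  "Cop \<mu> la \<kappa> X =
     (vadd (vsmul (alpha \<mu> la) (vH (fst X))) (vsmul (- beta \<mu> la) (vLam \<kappa> (snd X))),
      vadd (vsmul (delta \<mu> la) (vLamInv \<kappa> (fst X))) (vsmul (- alpha \<mu> la) (vH (snd X))))"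

definition Rop :: "real \<Rightarrow> real \<Rightarrow> real \<Rightarrow> real \<Rightarrow> complex \<Rightarrow> blk \<Rightarrow> blk" where
  "Rop \<mu>p lp \<mu>m lm \<kappa> X =
     (let Y = badd (bsmul (1/2) X) (Cop \<mu>m lm \<kappa> X)
      in bsmul (inverse (rho \<mu>p lp \<mu>m lm)) (badd (Cop \<mu>p lp \<kappa> Y) (Cop \<mu>m lm \<kappa> Y)))"

definition R12 :: "real \<Rightarrow> real \<Rightarrow> real \<Rightarrow> real \<Rightarrow> complex \<Rightarrow> vf \<Rightarrow> vf" where
  "R12 \<mu>p lp \<mu>m lm \<kappa> \<phi> = fst (Rop \<mu>p lp \<mu>m lm \<kappa> (vzero, \<phi>))"

definition R21 :: "real \<Rightarrow> real \<Rightarrow> real \<Rightarrow> real \<Rightarrow> complex \<Rightarrow> vf \<Rightarrow> vf" where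
  "R21 \<mu>p lp \<mu>m lm \<kappa> g = snd (Rop \<mu>p lp \<mu>m lm \<kappa> (g, vzero))"

end

theory Submission
  imports Defs
begin


lemma real_bounds:
  fixes x y N p r m :: real
  assumes e1: "x\<^sup>2 - y\<^sup>2 = N - p" and e2: "2*x*y = -r" and x0: "x \<ge> 0" and r0: "r > 0"
    and N0: "N \<ge> 0" and m1: "m \<ge> 1" and mN: "m\<^sup>2 = N \<or> (N = 0 \<and> m = 1)"
  shows "min (1/2) (r\<^sup>2 / (4 * (3*\<bar>p\<bar>+1+r) * (2*\<bar>p\<bar>+1))) * m\<^sup>2 \<le> x\<^sup>2"
    and "x\<^sup>2 + y\<^sup>2 \<le> (1+\<bar>p\<bar>+r) * m\<^sup>2"
    and "x > 0" and "y < 0"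
proof -
  show xp: "x > 0" using e2 x0 r0 by (cases "x = 0") auto
  have "x * y < 0" using e2 r0 by linarith
  thus yn: "y < 0" using xp by (simp add: mult_less_0_iff)
  have sq: "(x\<^sup>2 + y\<^sup>2)\<^sup>2 = (N - p)\<^sup>2 + r\<^sup>2"
  proof -
    have "(x\<^sup>2 + y\<^sup>2)\<^sup>2 = (x\<^sup>2 - y\<^sup>2)\<^sup>2 + (2*x*y)\<^sup>2" by (simp add: power2_eq_square algebra_simps)
    thus ?thesis using e1 e2 by simp
  qed
  have "(N - p)\<^sup>2 + r\<^sup>2 \<le> (N + \<bar>p\<bar> + r)\<^sup>2"
  proof -
    have "\<bar>N - p\<bar> \<le> N + \<bar>p\<bar>" using N0 by arith
    hence "\<bar>N - p\<bar>\<^sup>2 \<le> (N + \<bar>p\<bar>)\<^sup>2" by (rule power_mono) auto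
    hence "(N - p)\<^sup>2 \<le> (N + \<bar>p\<bar>)\<^sup>2" by simp
    moreover have "(N + \<bar>p\<bar> + r)\<^sup>2 = (N + \<bar>p\<bar>)\<^sup>2 + 2*r*(N+\<bar>p\<bar>) + r\<^sup>2" by (simp add: power2_eq_square algebra_simps)
    moreover have "0 \<le> 2*r*(N+\<bar>p\<bar>)" using N0 r0 by simp
    ultimately show ?thesis by linarith
  qed
  hence "(x\<^sup>2 + y\<^sup>2)\<^sup>2 \<le> (N + \<bar>p\<bar> + r)\<^sup>2" using sq by simp
  hence up: "x\<^sup>2 + y\<^sup>2 \<le> N + \<bar>p\<bar> + r" by (rule power2_le_imp_le) (use N0 r0 in auto)
  have m2: "m\<^sup>2 \<ge> 1" using m1 by (simp add: one_le_power)
  have Nm: "N \<le> m\<^sup>2" using mN by auto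
  show "x\<^sup>2 + y\<^sup>2 \<le> (1+\<bar>p\<bar>+r) * m\<^sup>2"
  proof -
    have a: "\<bar>p\<bar> * 1 \<le> \<bar>p\<bar> * m\<^sup>2" by (rule mult_left_mono) (use m2 in auto)
    have b: "r * 1 \<le> r * m\<^sup>2" by (rule mult_left_mono) (use m2 r0 in auto)
    have "N + \<bar>p\<bar> + r \<le> m\<^sup>2 + \<bar>p\<bar>*m\<^sup>2 + r*m\<^sup>2" using Nm a b by linarith
    thus ?thesis using up by (simp add: algebra_simps)
  qed
  define K where "K = r\<^sup>2 / (4 * (3*\<bar>p\<bar>+1+r) * (2*\<bar>p\<bar>+1))"
  define ca where "ca = min (1/2) K"
  have d1: "0 < 3*\<bar>p\<bar>+1+r" "0 < 2*\<bar>p\<bar>+1" using r0 abs_ge_zero[of p] by linarith+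
  have Kpos: "K > 0" unfolding K_def using r0 d1 by (intro divide_pos_pos mult_pos_pos) auto
  have cpos: "ca > 0" unfolding ca_def using Kpos by simp
  have "ca * m\<^sup>2 \<le> x\<^sup>2"
  proof (cases "N \<ge> 2*\<bar>p\<bar>+1")
    case True
    hence mN': "m\<^sup>2 = N" using mN by auto
    have xN: "x\<^sup>2 \<ge> N/2" using e1 True zero_le_power2[of y] abs_ge_self[of p] by linarith
    have "ca \<le> 1/2" unfolding ca_def by simp
    hence "ca * N \<le> 1/2 * N" by (rule mult_right_mono) (use N0 in auto)
    thus ?thesis using mN' xN by simp
  next
    case False
    have y2: "y\<^sup>2 \<le> 3*\<bar>p\<bar>+1+r" using up False zero_le_power2[of x] by linarith
    have y2p: "y\<^sup>2 > 0" using yn by simp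
    have "(2*x*y)\<^sup>2 = r\<^sup>2" using e2 by simp
    hence xy: "x\<^sup>2 * y\<^sup>2 = r\<^sup>2/4" by (simp add: power_mult_distrib)
    have "x\<^sup>2 = r\<^sup>2/(4*y\<^sup>2)" using xy y2p by (simp add: field_simps)
    moreover have "r\<^sup>2/(4*(3*\<bar>p\<bar>+1+r)) \<le> r\<^sup>2/(4*y\<^sup>2)" by (rule divide_left_mono) (use y2 y2p d1 in auto)
    ultimately have xl: "x\<^sup>2 \<ge> r\<^sup>2/(4*(3*\<bar>p\<bar>+1+r))" by simp
    have mle: "m\<^sup>2 \<le> 2*\<bar>p\<bar>+1" using mN False by auto
    have "ca * m\<^sup>2 \<le> K * (2*\<bar>p\<bar>+1)"
      by (rule mult_mono) (use mle cpos m2 Kpos in \<open>auto simp: ca_def\<close>)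
    also have "\<dots> = r\<^sup>2/(4*(3*\<bar>p\<bar>+1+r))" unfolding K_def using d1 by (simp add: nonzero_divide_mult_cancel_right) 
    finally show ?thesis using xl by linarith
  qed
  thus "min (1/2) (r\<^sup>2 / (4 * (3*\<bar>p\<bar>+1+r) * (2*\<bar>p\<bar>+1))) * m\<^sup>2 \<le> x\<^sup>2"
    unfolding ca_def K_def .
qed


lemma derived_bounds:
  fixes x y r m ca C :: real
  assumes xp: "x > 0" and yn: "y < 0" and e2: "2*x*y = -r" and r0: "r > 0" and m1: "m \<ge> 1"
    and ca0: "ca > 0" and C0: "C > 0" and lo: "ca * m\<^sup>2 \<le> x\<^sup>2" and hi: "x\<^sup>2 + y\<^sup>2 \<le> C * m\<^sup>2"
  shows "sqrt ca / C / m \<le> x / (x\<^sup>2 + y\<^sup>2)"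
    and "r / (2 * C * sqrt C) / m^3 \<le> -y / (x\<^sup>2 + y\<^sup>2)"
    and "1 / sqrt (x\<^sup>2 + y\<^sup>2) \<le> 1 / (sqrt ca * m)"
    and "sqrt ca * m \<le> x"
    and "r / (2 * sqrt C) / m \<le> -y"
    and "sqrt (x\<^sup>2 + y\<^sup>2) \<le> sqrt C * m"
proof -
  have m0: "m > 0" using m1 by simp
  have s0: "x\<^sup>2 + y\<^sup>2 > 0" using xp by (simp add: add_pos_nonneg)
  have "sqrt (ca * m\<^sup>2) \<le> sqrt (x\<^sup>2)" using lo by (rule real_sqrt_le_mono)
  thus sx: "sqrt ca * m \<le> x" using xp m0 by (simp add: real_sqrt_mult)
  have "x\<^sup>2 \<le> C * m\<^sup>2" using hi zero_le_power2[of y] by linarith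
  hence "sqrt (x\<^sup>2) \<le> sqrt (C * m\<^sup>2)" by (rule real_sqrt_le_mono)
  hence xC: "x \<le> sqrt C * m" using xp m0 by (simp add: real_sqrt_mult)
  have "sqrt (x\<^sup>2 + y\<^sup>2) \<le> sqrt (C * m\<^sup>2)" using hi by (rule real_sqrt_le_mono)
  thus "sqrt (x\<^sup>2 + y\<^sup>2) \<le> sqrt C * m" using m0 by (simp add: real_sqrt_mult)
  have sca: "sqrt ca > 0" using ca0 by simp
  have sC: "sqrt C > 0" using C0 by simp
  have "x \<le> sqrt (x\<^sup>2 + y\<^sup>2)" by (rule real_le_rsqrt) simp
  hence "1 / sqrt (x\<^sup>2 + y\<^sup>2) \<le> 1 / x" using xp s0 by (rule_tac divide_left_mono) auto
  also have "\<dots> \<le> 1 / (sqrt ca * m)" using sx sca m0 xp by (rule_tac divide_left_mono) auto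
  finally show "1 / sqrt (x\<^sup>2 + y\<^sup>2) \<le> 1 / (sqrt ca * m)" .
  have ydef: "-y = r / (2*x)" using e2 xp by (simp add: field_simps)
  have "r / (2 * sqrt C * m) \<le> r / (2*x)" using xC xp r0 sC m0 by (rule_tac divide_left_mono) auto
  thus yb: "r / (2 * sqrt C) / m \<le> -y" using ydef by simp
  have "sqrt ca / C / m = (sqrt ca * m) / (C * m\<^sup>2)" using m0 by (simp add: power2_eq_square)
  also have "\<dots> \<le> x / (C * m\<^sup>2)" using sx C0 m0 by (rule_tac divide_right_mono) auto
  also have "\<dots> \<le> x / (x\<^sup>2 + y\<^sup>2)" using hi s0 xp C0 m0 by (rule_tac divide_left_mono) auto
  finally show "sqrt ca / C / m \<le> x / (x\<^sup>2 + y\<^sup>2)" .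
  have "r / (2 * C * sqrt C) / m^3 = (r / (2 * sqrt C) / m) / (C * m\<^sup>2)" using m0 C0
    by (simp add: power2_eq_square power3_eq_cube)
  also have "\<dots> \<le> -y / (C * m\<^sup>2)" using yb C0 m0 by (rule_tac divide_right_mono) auto
  also have "\<dots> \<le> -y / (x\<^sup>2 + y\<^sup>2)" using hi s0 yn C0 m0 by (rule_tac divide_left_mono) auto
  finally show "r / (2 * C * sqrt C) / m^3 \<le> -y / (x\<^sup>2 + y\<^sup>2)" .
qed


definition mm :: "int \<Rightarrow> real" where "mm n = (if n = 0 then 1 else \<bar>real_of_int n\<bar>)"

lemma mm_ge1: "mm n \<ge> 1"
  unfolding mm_def by auto

lemma mm_sq: "(mm n)\<^sup>2 = (real_of_int n)\<^sup>2 \<or> ((real_of_int n)\<^sup>2 = 0 \<and> mm n = 1)"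
proof (cases "n = 0")
  case False
  then show ?thesis unfolding mm_def by simp
qed (simp add: mm_def)

lemma lam_sym_csqrt: "lam_sym \<kappa> n = inverse (csqrt ((of_int n)\<^sup>2 - \<kappa>\<^sup>2))"
proof -
  have "(-1/2::complex) = - (1/2)" by simp
  thus ?thesis unfolding lam_sym_def csqrt_conv_powr by (simp only: powr_minus)
qed

lemma lam_bounds:
  assumes k1: "Re \<kappa> > 0" and k2: "Im \<kappa> > 0"
  shows "\<exists>c>0. \<forall>n. lam_sym \<kappa> n \<noteq> 0 \<and> Re (lam_sym \<kappa> n) \<ge> c / mm n \<and> Im (lam_sym \<kappa> n) \<ge> c / (mm n)^3
     \<and> cmod (lam_sym \<kappa> n) \<le> 1 / (c * mm n) \<and> Re (inverse (lam_sym \<kappa> n)) \<ge> c * mm n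
     \<and> - Im (inverse (lam_sym \<kappa> n)) \<ge> c / mm n \<and> cmod (inverse (lam_sym \<kappa> n)) \<le> mm n / c"
proof -
  define p where "p = Re (\<kappa>\<^sup>2)"
  define r where "r = Im (\<kappa>\<^sup>2)"
  have r0: "r > 0" unfolding r_def using k1 k2 by (simp add: power2_eq_square)
  define ca where "ca = min (1/2) (r\<^sup>2 / (4 * (3*\<bar>p\<bar>+1+r) * (2*\<bar>p\<bar>+1)))"
  define C where "C = 1 + \<bar>p\<bar> + r"
  have C0: "C > 0" unfolding C_def using r0 by simp
  have d1: "0 < 3*\<bar>p\<bar>+1+r" "0 < 2*\<bar>p\<bar>+1" using r0 abs_ge_zero[of p] by linarith+
  have ca0: "ca > 0" unfolding ca_def using r0 d1 by (simp add: divide_pos_pos)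
  define c where "c = Min {sqrt ca / C, r / (2 * C * sqrt C), sqrt ca, r / (2 * sqrt C), 1 / sqrt C}"
  have c0: "c > 0" unfolding c_def using ca0 C0 r0 by simp
  have cle: "c \<le> sqrt ca / C" "c \<le> r / (2 * C * sqrt C)" "c \<le> sqrt ca" "c \<le> r / (2 * sqrt C)" "c \<le> 1 / sqrt C"
    unfolding c_def by auto
  have "\<forall>n. lam_sym \<kappa> n \<noteq> 0 \<and> Re (lam_sym \<kappa> n) \<ge> c / mm n \<and> Im (lam_sym \<kappa> n) \<ge> c / (mm n)^3
     \<and> cmod (lam_sym \<kappa> n) \<le> 1 / (c * mm n) \<and> Re (inverse (lam_sym \<kappa> n)) \<ge> c * mm n
     \<and> - Im (inverse (lam_sym \<kappa> n)) \<ge> c / mm n \<and> cmod (inverse (lam_sym \<kappa> n)) \<le> mm n / c"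
  proof
    fix n
    define z where "z = (of_int n)\<^sup>2 - \<kappa>\<^sup>2"
    define w where "w = csqrt z"
    define x where "x = Re w"
    define y where "y = Im w"
    define m where "m = mm n"
    define N where "N = (real_of_int n)\<^sup>2"
    have lw: "lam_sym \<kappa> n = inverse w" unfolding w_def z_def by (rule lam_sym_csqrt)
    have wz: "w * w = z" unfolding w_def using power2_csqrt[of z] by (simp add: power2_eq_square)
    have e1: "x\<^sup>2 - y\<^sup>2 = N - p"
    proof -
      have "Re (w * w) = Re z" using wz by simp
      thus ?thesis unfolding x_def y_def N_def p_def z_def by (simp add: power2_eq_square)
    qed
    have e2: "2*x*y = -r"
    proof -
      have "Im (w * w) = Im z" using wz by simp
      thus ?thesis unfolding x_def y_def r_def z_def by (simp add: power2_eq_square)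
    qed
    have x0: "x \<ge> 0" unfolding x_def w_def by (rule Re_csqrt)
    have N0: "N \<ge> 0" unfolding N_def by simp
    have m1: "m \<ge> 1" unfolding m_def by (rule mm_ge1)
    have mN: "m\<^sup>2 = N \<or> (N = 0 \<and> m = 1)" unfolding m_def N_def using mm_sq by blast
    note rb = real_bounds[OF e1 e2 x0 r0 N0 m1 mN]
    have lo: "ca * m\<^sup>2 \<le> x\<^sup>2" using rb(1) unfolding ca_def .
    have hi: "x\<^sup>2 + y\<^sup>2 \<le> C * m\<^sup>2" using rb(2) unfolding C_def .
    note db = derived_bounds[OF rb(3) rb(4) e2 r0 m1 ca0 C0 lo hi]
    have m0: "m > 0" using m1 by simp
    have w0: "w \<noteq> 0" using rb(3) unfolding x_def by auto
    have cm: "cmod w = sqrt (x\<^sup>2 + y\<^sup>2)" unfolding x_def y_def by (simp add: cmod_def)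
    have Rel: "Re (inverse w) = x / (x\<^sup>2 + y\<^sup>2)" unfolding x_def y_def by (simp add: power2_eq_square)
    have Iml: "Im (inverse w) = -y / (x\<^sup>2 + y\<^sup>2)" unfolding x_def y_def by (simp add: power2_eq_square)
    have f1: "c / m \<le> sqrt ca / C / m" by (rule divide_right_mono) (use cle(1) m0 in auto)
    have f2: "c / m^3 \<le> r / (2 * C * sqrt C) / m^3" by (rule divide_right_mono) (use cle(2) m0 in auto)
    have f3: "1 / (sqrt ca * m) \<le> 1 / (c * m)" by (rule divide_left_mono) (use cle(3) m0 c0 ca0 in auto)
    have f4: "c * m \<le> sqrt ca * m" using cle(3) m0 by simp
    have f5: "c / m \<le> r / (2 * sqrt C) / m" by (rule divide_right_mono) (use cle(4) m0 in auto)
    have f6: "sqrt C * m \<le> m / c" using cle(5) m0 c0 C0 by (simp add: field_simps)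
    show "lam_sym \<kappa> n \<noteq> 0 \<and> Re (lam_sym \<kappa> n) \<ge> c / mm n \<and> Im (lam_sym \<kappa> n) \<ge> c / (mm n)^3
     \<and> cmod (lam_sym \<kappa> n) \<le> 1 / (c * mm n) \<and> Re (inverse (lam_sym \<kappa> n)) \<ge> c * mm n
     \<and> - Im (inverse (lam_sym \<kappa> n)) \<ge> c / mm n \<and> cmod (inverse (lam_sym \<kappa> n)) \<le> mm n / c"
      unfolding lw m_def[symmetric] using w0 db f1 f2 f3 f4 f5 f6 Rel Iml cm
      by (simp add: norm_inverse norm_divide inverse_eq_divide x_def[symmetric] y_def[symmetric])
  qed
  thus ?thesis using c0 by blast
qed


lemma sum_bound:
  fixes T :: "int \<Rightarrow> complex" and W1 W2 V :: "int \<Rightarrow> real" and a :: complex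
  assumes V: "V summable_on UNIV" and W1: "W1 summable_on UNIV" and W2: "W2 summable_on UNIV"
    and Tb: "\<And>n. cmod (T n) \<le> V n" and Tl: "\<And>n. Re (a * T n) \<ge> c * (W1 n + W2 n)"
  shows "Re (a * (\<Sum>\<^sub>\<infinity>n\<in>UNIV. T n)) \<ge> c * ((\<Sum>\<^sub>\<infinity>n\<in>UNIV. W1 n) + (\<Sum>\<^sub>\<infinity>n\<in>UNIV. W2 n))"
proof -
  have "(\<lambda>n. norm (T n)) summable_on UNIV" using Infinite_Sum.abs_summable_on_comparison_test'[OF V] Tb by blast
  hence Ts: "T summable_on UNIV" using abs_summable_summable by blast
  hence aTs: "(\<lambda>n. a * T n) summable_on UNIV" by (rule summable_on_cmult_right)
  have "a * (\<Sum>\<^sub>\<infinity>n\<in>UNIV. T n) = (\<Sum>\<^sub>\<infinity>n\<in>UNIV. a * T n)" using Ts by (simp add: infsum_cmult_right)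
  hence "Re (a * (\<Sum>\<^sub>\<infinity>n\<in>UNIV. T n)) = (\<Sum>\<^sub>\<infinity>n\<in>UNIV. Re (a * T n))" using infsum_Re[OF aTs] by simp
  moreover have "(\<Sum>\<^sub>\<infinity>n\<in>UNIV. c * (W1 n + W2 n)) \<le> (\<Sum>\<^sub>\<infinity>n\<in>UNIV. Re (a * T n))"
  proof (rule infsum_mono)
    show "(\<lambda>n. c * (W1 n + W2 n)) summable_on UNIV"
      by (rule summable_on_cmult_right) (rule summable_on_add[OF W1 W2])
    show "(\<lambda>n. Re (a * T n)) summable_on UNIV" using aTs by (rule summable_on_Re)
  qed (use Tl in auto)
  moreover have "(\<Sum>\<^sub>\<infinity>n\<in>UNIV. c * (W1 n + W2 n)) = c * ((\<Sum>\<^sub>\<infinity>n\<in>UNIV. W1 n) + (\<Sum>\<^sub>\<infinity>n\<in>UNIV. W2 n))"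
    using infsum_add[OF W1 W2] summable_on_add[OF W1 W2] by (simp add: infsum_cmult_right)
  ultimately show ?thesis by linarith
qed

lemma sob_weight_mm: "sob_weight s f n = mm n powr (2 * s) * (cmod (f n))\<^sup>2"
  unfolding sob_weight_def mm_def by auto

lemma mm_powr_m1: "mm n powr (2*(-1/2)) = 1 / mm n"
  using mm_ge1[of n] by (simp add: powr_minus_divide)

lemma mm_powr_m3: "mm n powr (2*(-3/2)) = 1 / (mm n)^3"
proof -
  have "mm n powr (2*(-3/2)) = mm n powr (- real 3)" by simp
  also have "\<dots> = 1 / (mm n)^3" using mm_ge1[of n] by (simp only: powr_minus_divide powr_realpow)
  finally show ?thesis .
qed

lemma mm_powr_1: "mm n powr (2*(1/2)) = mm n"
  using mm_ge1[of n] by simp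

lemma weight_m3_summable:
  assumes "inH (-1/2) f" shows "inH (-3/2) f"
  unfolding inH_def
proof (rule summable_on_comparison_test)
  show "sob_weight (-1/2) f summable_on UNIV" using assms unfolding inH_def .
  fix n :: int
  have m: "mm n \<ge> 1" by (rule mm_ge1)
  have "1 / (mm n)^3 \<le> 1 / mm n" using m mult_mono[of 1 "mm n" 1 "mm n"] by (rule_tac divide_left_mono) (auto simp: power3_eq_cube)
  thus "sob_weight (-3/2) f n \<le> sob_weight (-1/2) f n"
    unfolding sob_weight_mm mm_powr_m1 mm_powr_m3 by (rule mult_right_mono) simp
  show "0 \<le> sob_weight (-3/2) f n" unfolding sob_weight_mm by simp
qed


lemmas all_defs = R12_def R21_def Rop_def Let_def badd_def bsmul_def Cop_def vadd_def vsmul_def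
  vH_def vLam_def vLamInv_def Lam_def LamInv_def Hs_def vzero_def

lemma R12_comp:
  "fst (R12 \<mu>p lp \<mu>m lm \<kappa> \<phi>) n = inverse (rho \<mu>p lp \<mu>m lm) * lam_sym \<kappa> n *
     (- (beta \<mu>p lp + beta \<mu>m lm) / 2 * fst \<phi> n
      - (beta \<mu>p lp * alpha \<mu>m lm - alpha \<mu>p lp * beta \<mu>m lm) * (if n \<ge> 0 then 1 else -1) * snd \<phi> n)"
  "snd (R12 \<mu>p lp \<mu>m lm \<kappa> \<phi>) n = inverse (rho \<mu>p lp \<mu>m lm) * lam_sym \<kappa> n *
     (- (beta \<mu>p lp + beta \<mu>m lm) / 2 * snd \<phi> n
      + (beta \<mu>p lp * alpha \<mu>m lm - alpha \<mu>p lp * beta \<mu>m lm) * (if n \<ge> 0 then 1 else -1) * fst \<phi> n)"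
  by (cases "0 \<le> n"; simp add: all_defs algebra_simps add_divide_distrib diff_divide_distrib)+

lemma R21_comp:
  "fst (R21 \<mu>p lp \<mu>m lm \<kappa> g) n = inverse (rho \<mu>p lp \<mu>m lm) * inverse (lam_sym \<kappa> n) *
     ((delta \<mu>p lp + delta \<mu>m lm) / 2 * fst g n
      - (delta \<mu>p lp * alpha \<mu>m lm - alpha \<mu>p lp * delta \<mu>m lm) * (if n \<ge> 0 then 1 else -1) * snd g n)"
  "snd (R21 \<mu>p lp \<mu>m lm \<kappa> g) n = inverse (rho \<mu>p lp \<mu>m lm) * inverse (lam_sym \<kappa> n) *
     ((delta \<mu>p lp + delta \<mu>m lm) / 2 * snd g n
      + (delta \<mu>p lp * alpha \<mu>m lm - alpha \<mu>p lp * delta \<mu>m lm) * (if n \<ge> 0 then 1 else -1) * fst g n)"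
  by (cases "0 \<le> n"; simp add: all_defs algebra_simps add_divide_distrib diff_divide_distrib)+


lemma term_form:
  fixes K X E h u v :: complex and s g hr :: real
  assumes "X = of_real s" "E = \<i> * of_real g" "h = of_real hr"
  shows "K * (X * u - E * h * v) * cnj u + K * (X * v + E * h * u) * cnj v
       = K * of_real (s * ((cmod u)\<^sup>2 + (cmod v)\<^sup>2) - 2 * g * hr * Im (u * cnj v))"
  using assms unfolding cmod_power2 by (simp add: complex_eq_iff algebra_simps power2_eq_square)

lemma im_bound: "\<bar>2 * Im (u * cnj v)\<bar> \<le> (cmod u)\<^sup>2 + (cmod v)\<^sup>2"
proof -
  have i: "Im (u * cnj v) = Im u * Re v - Re u * Im v" by simp
  have p1: "0 \<le> (Im u - Re v)\<^sup>2" "0 \<le> (Re u + Im v)\<^sup>2" "0 \<le> (Im u + Re v)\<^sup>2" "0 \<le> (Re u - Im v)\<^sup>2" by simp_all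
  hence "0 \<le> (Im u)\<^sup>2 + (Re v)\<^sup>2 - 2 * Im u * Re v" "0 \<le> (Re u)\<^sup>2 + (Im v)\<^sup>2 + 2 * Re u * Im v"
    "0 \<le> (Im u)\<^sup>2 + (Re v)\<^sup>2 + 2 * Im u * Re v" "0 \<le> (Re u)\<^sup>2 + (Im v)\<^sup>2 - 2 * Re u * Im v"
    by (simp_all only: power2_diff power2_sum)
  thus ?thesis unfolding i cmod_power2 abs_le_iff by (simp add: algebra_simps; linarith)
qed

lemma Q_bounds:
  fixes s g hr I S :: real
  assumes h: "hr = 1 \<or> hr = -1" and I: "\<bar>2 * I\<bar> \<le> S"
  shows "- (s * S - 2 * g * hr * I) \<ge> (- s - \<bar>g\<bar>) * S"
    and "\<bar>s * S - 2 * g * hr * I\<bar> \<le> (\<bar>s\<bar> + \<bar>g\<bar>) * S"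
proof -
  have S0: "S \<ge> 0" using I by linarith
  have "\<bar>g * hr * (2 * I)\<bar> \<le> \<bar>g\<bar> * S" using h I by (auto simp: abs_mult intro!: mult_left_mono)
  hence a: "\<bar>2 * g * hr * I\<bar> \<le> \<bar>g\<bar> * S" by (simp add: algebra_simps)
  have "\<bar>s * S\<bar> = \<bar>s\<bar> * S" using S0 by (simp add: abs_mult)
  thus "\<bar>s * S - 2 * g * hr * I\<bar> \<le> (\<bar>s\<bar> + \<bar>g\<bar>) * S" using a by (simp add: algebra_simps)
  show "- (s * S - 2 * g * hr * I) \<ge> (- s - \<bar>g\<bar>) * S" using a by (simp add: algebra_simps)
qed

definition aa :: "real \<Rightarrow> real \<Rightarrow> real" where "aa \<mu> la = \<mu> / (2 * (la + 2 * \<mu>))"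
definition bb :: "real \<Rightarrow> real \<Rightarrow> real" where "bb \<mu> la = (la + 3 * \<mu>) / (4 * \<mu> * (la + 2 * \<mu>))"
definition dd :: "real \<Rightarrow> real \<Rightarrow> real" where "dd \<mu> la = - (\<mu> * (la + \<mu>)) / (la + 2 * \<mu>)"

lemma params:
  assumes "\<mu> > 0" "la > - \<mu>"
  shows "alpha \<mu> la = \<i> * of_real (aa \<mu> la)" "beta \<mu> la = of_real (bb \<mu> la)" "delta \<mu> la = of_real (dd \<mu> la)"
    "0 < aa \<mu> la" "aa \<mu> la < 1/2" "bb \<mu> la > 0" "dd \<mu> la < 0"
proof -
  have p: "la + 2 * \<mu> > 0" "la + 3 * \<mu> > 0" "la + \<mu> > 0" using assms by linarith+
  show "alpha \<mu> la = \<i> * of_real (aa \<mu> la)" unfolding alpha_def aa_def by simp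
  show "beta \<mu> la = of_real (bb \<mu> la)" unfolding beta_def bb_def ..
  show "delta \<mu> la = of_real (dd \<mu> la)" unfolding delta_def dd_def ..
  show "0 < aa \<mu> la" unfolding aa_def using p assms by simp
  show "aa \<mu> la < 1/2" unfolding aa_def using p assms by (simp add: field_simps)
  show "bb \<mu> la > 0" unfolding bb_def using p assms by simp
  show "dd \<mu> la < 0" unfolding dd_def using p assms by (simp add: divide_neg_pos)
qed


lemma case_lemma:
  fixes T k :: "int \<Rightarrow> complex" and Q S om om' W1 W2 V1 V2 :: "int \<Rightarrow> real" and a :: complex
    and \<rho> e K Kk c :: real
  assumes W1: "W1 summable_on UNIV" and W2: "W2 summable_on UNIV"
    and V1: "V1 summable_on UNIV" and V2: "V2 summable_on UNIV"
    and Weq: "\<And>n. W1 n + W2 n = om n * S n" and Veq: "\<And>n. V1 n + V2 n = om' n * S n"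
    and Teq: "\<And>n. T n = of_real (Q n / \<rho>) * k n" and r0: "\<rho> > 0" and e0: "e \<ge> 0"
    and Qup: "\<And>n. Q n \<le> - (e * S n)" and Qabs: "\<And>n. \<bar>Q n\<bar> \<le> K * S n" and S0: "\<And>n. S n \<ge> 0"
    and om0: "\<And>n. om n \<ge> 0"
    and ak: "\<And>n. Re (a * k n) \<le> - (c * om n)" and c0: "c \<ge> 0" and kb: "\<And>n. cmod (k n) \<le> Kk * om' n"
  shows "Re (a * (\<Sum>\<^sub>\<infinity>n\<in>UNIV. T n)) \<ge> (e * c / \<rho>) * ((\<Sum>\<^sub>\<infinity>n\<in>UNIV. W1 n) + (\<Sum>\<^sub>\<infinity>n\<in>UNIV. W2 n))"
proof (rule sum_bound)
  show "(\<lambda>n. (K * Kk / \<rho>) * (V1 n + V2 n)) summable_on UNIV"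
    by (rule summable_on_cmult_right) (rule summable_on_add[OF V1 V2])
  show "W1 summable_on UNIV" "W2 summable_on UNIV" by (fact W1, fact W2)
  fix n
  have a1: "\<bar>Q n\<bar> / \<rho> \<le> K * S n / \<rho>" using Qabs[of n] r0 by (simp add: divide_right_mono)
  have a0: "0 \<le> K * S n / \<rho>" by (rule order_trans[OF _ a1]) (use r0 in simp)
  have "cmod (T n) = \<bar>Q n\<bar> / \<rho> * cmod (k n)" unfolding Teq using r0 by (simp add: norm_mult norm_divide)
  also have "\<dots> \<le> K * S n / \<rho> * (Kk * om' n)"
    by (rule mult_mono) (use a1 kb[of n] r0 a0 in auto)
  also have "\<dots> = (K * Kk / \<rho>) * (V1 n + V2 n)" unfolding Veq by (simp add: algebra_simps)
  finally show "cmod (T n) \<le> (K * Kk / \<rho>) * (V1 n + V2 n)" .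
  have b1: "e * S n / \<rho> \<le> - Q n / \<rho>" using divide_right_mono[OF Qup[of n], of \<rho>] r0 by simp
  have b0: "0 \<le> e * S n / \<rho>" using e0 S0[of n] r0 by simp
  have "(e * c / \<rho>) * (W1 n + W2 n) = (e * S n / \<rho>) * (c * om n)" unfolding Weq by (simp add: algebra_simps)
  also have "\<dots> \<le> (- Q n / \<rho>) * (- Re (a * k n))"
    by (rule mult_mono) (use b1 b0 ak[of n] c0 om0[of n] in auto)
  also have "\<dots> = Re (a * T n)" unfolding Teq by (simp add: algebra_simps diff_divide_distrib add_divide_distrib)
  finally show "(e * c / \<rho>) * (W1 n + W2 n) \<le> Re (a * T n)" .
qed


lemma weight_half_summable:
  assumes "inH (1/2) f" shows "inH (-1/2) f"
  unfolding inH_def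
proof (rule summable_on_comparison_test)
  show "sob_weight (1/2) f summable_on UNIV" using assms unfolding inH_def .
  fix n :: int
  have m: "mm n \<ge> 1" by (rule mm_ge1)
  have "1 / mm n \<le> mm n" using m by (simp add: field_simps) (metis m mult_mono one_le_numeral order.trans mult_1 zero_le_one)
  thus "sob_weight (-1/2) f n \<le> sob_weight (1/2) f n"
    unfolding sob_weight_mm mm_powr_m1 mm_powr_1 by (rule mult_right_mono) simp
  show "0 \<le> sob_weight (-1/2) f n" unfolding sob_weight_mm by simp
qed


theorem mainTheorem11:
  fixes \<mu>p lp \<mu>m lm :: real and \<kappa> :: complex
  assumes "\<mu>p > 0" and "\<mu>m > 0" and "lp > - \<mu>p" and "lm > - \<mu>m"
    and "Re \<kappa> > 0" and "Im \<kappa> > 0"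
  shows "\<exists>c1 > 0.
    (\<forall>\<phi>. inHv (-1/2) \<phi> \<longrightarrow>
       - Re (pairing (R12 \<mu>p lp \<mu>m lm \<kappa> \<phi>) (vconj \<phi>)) \<ge> c1 * sob_vnorm2 (-1/2) \<phi> \<and>
       - Im (pairing (R12 \<mu>p lp \<mu>m lm \<kappa> \<phi>) (vconj \<phi>)) \<ge> c1 * sob_vnorm2 (-3/2) \<phi>) \<and>
    (\<forall>g. inHv (1/2) g \<longrightarrow>
       - Re (pairing (R21 \<mu>p lp \<mu>m lm \<kappa> g) (vconj g)) \<ge> c1 * sob_vnorm2 (1/2) g \<and>
       Im (pairing (R21 \<mu>p lp \<mu>m lm \<kappa> g) (vconj g)) \<ge> c1 * sob_vnorm2 (-1/2) g)"
proof -
  obtain c where c0: "c > 0" and cb: "\<And>n. lam_sym \<kappa> n \<noteq> 0 \<and> Re (lam_sym \<kappa> n) \<ge> c / mm n \<and> Im (lam_sym \<kappa> n) \<ge> c / (mm n)^3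
     \<and> cmod (lam_sym \<kappa> n) \<le> 1 / (c * mm n) \<and> Re (inverse (lam_sym \<kappa> n)) \<ge> c * mm n
     \<and> - Im (inverse (lam_sym \<kappa> n)) \<ge> c / mm n \<and> cmod (inverse (lam_sym \<kappa> n)) \<le> mm n / c"
    using lam_bounds[OF assms(5,6)] by blast
  note pp = params[OF assms(1,3)] and pm = params[OF assms(2,4)]
  define ap where "ap = aa \<mu>p lp"
  define bp where "bp = bb \<mu>p lp"
  define dp where "dp = dd \<mu>p lp"
  define am where "am = aa \<mu>m lm"
  define bm where "bm = bb \<mu>m lm"
  define dm where "dm = dd \<mu>m lm"
  note pp = pp[folded ap_def bp_def dp_def] and pm = pm[folded am_def bm_def dm_def]
  define \<rho>r where "\<rho>r = -(bp+bm)*(dp+dm) + (ap+am)\<^sup>2"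
  have r0: "\<rho>r > 0"
  proof -
    have "(bp+bm)*(dp+dm) < 0" using pp pm by (intro mult_pos_neg) auto
    thus ?thesis unfolding \<rho>r_def using zero_le_power2[of "ap+am"] by linarith
  qed
  have rho_eq: "rho \<mu>p lp \<mu>m lm = of_real \<rho>r"
    unfolding rho_def pp(1-3) pm(1-3) \<rho>r_def by (simp add: complex_eq_iff power2_eq_square algebra_simps)
  define g12 where "g12 = bp*am - ap*bm"
  define g21 where "g21 = dp*am - ap*dm"
  define e12 where "e12 = (bp+bm)/2 - \<bar>g12\<bar>"
  define e21 where "e21 = -(dp+dm)/2 - \<bar>g21\<bar>"
  have e12p: "e12 > 0"
  proof -
    have "\<bar>g12\<bar> \<le> \<bar>bp*am\<bar> + \<bar>ap*bm\<bar>" unfolding g12_def by (rule abs_triangle_ineq4)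
    also have "\<dots> = bp*am + ap*bm" using pp pm by (simp add: abs_mult)
    also have "\<dots> < bp*(1/2) + (1/2)*bm"
      using pp pm by (intro add_strict_mono mult_strict_left_mono mult_strict_right_mono) auto
    finally show ?thesis unfolding e12_def by simp
  qed
  have e21p: "e21 > 0"
  proof -
    have "\<bar>g21\<bar> \<le> \<bar>dp*am\<bar> + \<bar>ap*dm\<bar>" unfolding g21_def by (rule abs_triangle_ineq4)
    also have "\<dots> = (-dp)*am + ap*(-dm)" using pp pm by (simp add: abs_mult)
    also have "\<dots> < (-dp)*(1/2) + (1/2)*(-dm)"
      using pp pm by (intro add_strict_mono mult_strict_left_mono mult_strict_right_mono) auto
    finally show ?thesis unfolding e21_def by simp
  qed
  define e where "e = min e12 e21"
  have e0: "e > 0" unfolding e_def using e12p e21p by simp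
  define c1 where "c1 = e * (2 * pi * c) / \<rho>r"
  have c1p: "c1 > 0" unfolding c1_def using e0 c0 r0 by simp
  define hr where "hr n = (if 0 \<le> n then 1 else -1 :: real)" for n :: int
  have hr: "hr n = 1 \<or> hr n = -1" for n unfolding hr_def by auto
  have hc: "(if 0 \<le> n then 1 else -1 :: complex) = of_real (hr n)" for n unfolding hr_def by auto
  have Bc: "- (beta \<mu>p lp + beta \<mu>m lm) / 2 = of_real (- (bp+bm)/2)" using pp pm by simp
  have Dc: "(delta \<mu>p lp + delta \<mu>m lm) / 2 = of_real ((dp+dm)/2)" using pp pm by simp
  have Ec: "beta \<mu>p lp * alpha \<mu>m lm - alpha \<mu>p lp * beta \<mu>m lm = \<i> * of_real g12"
    using pp pm unfolding g12_def by (simp add: complex_eq_iff)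
  have Fc: "delta \<mu>p lp * alpha \<mu>m lm - alpha \<mu>p lp * delta \<mu>m lm = \<i> * of_real g21"
    using pp pm unfolding g21_def by (simp add: complex_eq_iff)
  have P1: "\<forall>\<phi>. inHv (-1/2) \<phi> \<longrightarrow>
       - Re (pairing (R12 \<mu>p lp \<mu>m lm \<kappa> \<phi>) (vconj \<phi>)) \<ge> c1 * sob_vnorm2 (-1/2) \<phi> \<and>
       - Im (pairing (R12 \<mu>p lp \<mu>m lm \<kappa> \<phi>) (vconj \<phi>)) \<ge> c1 * sob_vnorm2 (-3/2) \<phi>"
  proof (intro allI impI)
    fix \<phi> assume H: "inHv (-1/2) \<phi>"
    define S where "S n = (cmod (fst \<phi> n))\<^sup>2 + (cmod (snd \<phi> n))\<^sup>2" for n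
    define Q where "Q n = - (bp+bm)/2 * S n - 2 * g12 * hr n * Im (fst \<phi> n * cnj (snd \<phi> n))" for n
    define T where "T n = fst (R12 \<mu>p lp \<mu>m lm \<kappa> \<phi>) n * fst (vconj \<phi>) (-n)
        + snd (R12 \<mu>p lp \<mu>m lm \<kappa> \<phi>) n * snd (vconj \<phi>) (-n)" for n
    have Teq: "T n = of_real (Q n / \<rho>r) * lam_sym \<kappa> n" for n
    proof -
      have "T n = (inverse (rho \<mu>p lp \<mu>m lm) * lam_sym \<kappa> n) *
          (of_real (- (bp+bm)/2) * fst \<phi> n - (\<i> * of_real g12) * of_real (hr n) * snd \<phi> n) * cnj (fst \<phi> n)
        + (inverse (rho \<mu>p lp \<mu>m lm) * lam_sym \<kappa> n) *
          (of_real (- (bp+bm)/2) * snd \<phi> n + (\<i> * of_real g12) * of_real (hr n) * fst \<phi> n) * cnj (snd \<phi> n)"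
        unfolding T_def R12_comp vconj_def Bc Ec hc by (simp add: mult.assoc)
      also have "\<dots> = (inverse (rho \<mu>p lp \<mu>m lm) * lam_sym \<kappa> n) * of_real (Q n)"
        unfolding Q_def S_def by (rule term_form) auto
      finally show ?thesis unfolding rho_eq by (simp add: divide_inverse mult_ac)
    qed
    have Sge: "S n \<ge> 0" for n unfolding S_def by simp
    have Qb: "Q n \<le> - (e * S n)" "\<bar>Q n\<bar> \<le> (\<bar>- (bp+bm)/2\<bar> + \<bar>g12\<bar>) * S n" for n
    proof -
      have ib: "\<bar>2 * Im (fst \<phi> n * cnj (snd \<phi> n))\<bar> \<le> S n" unfolding S_def by (rule im_bound)
      note qb = Q_bounds[OF hr[of n] ib, of "- (bp+bm)/2" g12, folded Q_def]
      have "e * S n \<le> e12 * S n" unfolding e_def using Sge[of n] by (intro mult_right_mono) auto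
      moreover have "(- (- (bp+bm)/2) - \<bar>g12\<bar>) = e12" unfolding e12_def by linarith
      hence "(- (- (bp+bm)/2) - \<bar>g12\<bar>) * S n = e12 * S n" by simp
      ultimately show "Q n \<le> - (e * S n)" using qb(1) by linarith
      show "\<bar>Q n\<bar> \<le> (\<bar>- (bp+bm)/2\<bar> + \<bar>g12\<bar>) * S n" using qb(2) .
    qed
    have P: "pairing (R12 \<mu>p lp \<mu>m lm \<kappa> \<phi>) (vconj \<phi>) = 2 * of_real pi * (\<Sum>\<^sub>\<infinity>n\<in>UNIV. T n)"
      unfolding pairing_def T_def ..
    have W1: "sob_weight (-1/2) (fst \<phi>) summable_on UNIV" and W2: "sob_weight (-1/2) (snd \<phi>) summable_on UNIV"
      using H unfolding inHv_def inH_def by auto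
    have W1': "sob_weight (-3/2) (fst \<phi>) summable_on UNIV" and W2': "sob_weight (-3/2) (snd \<phi>) summable_on UNIV"
      using H weight_m3_summable unfolding inHv_def inH_def by auto
    have Weq1: "sob_weight (-1/2) (fst \<phi>) n + sob_weight (-1/2) (snd \<phi>) n = 1 / mm n * S n" for n
      unfolding sob_weight_mm mm_powr_m1 S_def by (simp add: algebra_simps)
    have Weq3: "sob_weight (-3/2) (fst \<phi>) n + sob_weight (-3/2) (snd \<phi>) n = 1 / (mm n)^3 * S n" for n
      unfolding sob_weight_mm mm_powr_m3 S_def by (simp add: algebra_simps)
    have mm0: "0 \<le> 1 / mm n" "0 \<le> 1 / (mm n)^3" for n using mm_ge1[of n] by simp_all
    have kb: "cmod (lam_sym \<kappa> n) \<le> 1 / c * (1 / mm n)" for n using cb[of n] by simp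
    have L1: "Re (- (2 * of_real pi) * (\<Sum>\<^sub>\<infinity>n\<in>UNIV. T n)) \<ge> (e * (2 * pi * c) / \<rho>r) *
        ((\<Sum>\<^sub>\<infinity>n\<in>UNIV. sob_weight (-1/2) (fst \<phi>) n) + (\<Sum>\<^sub>\<infinity>n\<in>UNIV. sob_weight (-1/2) (snd \<phi>) n))"
    proof (rule case_lemma[OF W1 W2 W1 W2 Weq1 Weq1 Teq r0 _ Qb(1) Qb(2) Sge mm0(1) _ _ kb])
      show "0 \<le> e" using e0 by simp
      show "0 \<le> 2 * pi * c" using c0 by simp
      fix n
      have "c / mm n \<le> Re (lam_sym \<kappa> n)" using cb[of n] by simp
      hence "2 * pi * (c / mm n) \<le> 2 * pi * Re (lam_sym \<kappa> n)" by (rule mult_left_mono) simp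
      thus "Re (- (2 * of_real pi) * lam_sym \<kappa> n) \<le> - (2 * pi * c * (1 / mm n))" by simp
    qed
    have L3: "Re ((2 * of_real pi * \<i>) * (\<Sum>\<^sub>\<infinity>n\<in>UNIV. T n)) \<ge> (e * (2 * pi * c) / \<rho>r) *
        ((\<Sum>\<^sub>\<infinity>n\<in>UNIV. sob_weight (-3/2) (fst \<phi>) n) + (\<Sum>\<^sub>\<infinity>n\<in>UNIV. sob_weight (-3/2) (snd \<phi>) n))"
    proof (rule case_lemma[OF W1' W2' W1 W2 Weq3 Weq1 Teq r0 _ Qb(1) Qb(2) Sge mm0(2) _ _ kb])
      show "0 \<le> e" using e0 by simp
      show "0 \<le> 2 * pi * c" using c0 by simp
      fix n
      have "c / (mm n)^3 \<le> Im (lam_sym \<kappa> n)" using cb[of n] by simp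
      hence "2 * pi * (c / (mm n)^3) \<le> 2 * pi * Im (lam_sym \<kappa> n)" by (rule mult_left_mono) simp
      thus "Re ((2 * of_real pi * \<i>) * lam_sym \<kappa> n) \<le> - (2 * pi * c * (1 / (mm n)^3))" by simp
    qed
    show "- Re (pairing (R12 \<mu>p lp \<mu>m lm \<kappa> \<phi>) (vconj \<phi>)) \<ge> c1 * sob_vnorm2 (-1/2) \<phi> \<and>
       - Im (pairing (R12 \<mu>p lp \<mu>m lm \<kappa> \<phi>) (vconj \<phi>)) \<ge> c1 * sob_vnorm2 (-3/2) \<phi>"
      using L1 L3 unfolding P c1_def sob_vnorm2_def sob_norm2_def by simp
  qed
  have P2: "\<forall>g. inHv (1/2) g \<longrightarrow>
       - Re (pairing (R21 \<mu>p lp \<mu>m lm \<kappa> g) (vconj g)) \<ge> c1 * sob_vnorm2 (1/2) g \<and>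
       Im (pairing (R21 \<mu>p lp \<mu>m lm \<kappa> g) (vconj g)) \<ge> c1 * sob_vnorm2 (-1/2) g"
  proof (intro allI impI)
    fix \<phi> assume H: "inHv (1/2) \<phi>"
    define S where "S n = (cmod (fst \<phi> n))\<^sup>2 + (cmod (snd \<phi> n))\<^sup>2" for n
    define Q where "Q n = (dp+dm)/2 * S n - 2 * g21 * hr n * Im (fst \<phi> n * cnj (snd \<phi> n))" for n
    define T where "T n = fst (R21 \<mu>p lp \<mu>m lm \<kappa> \<phi>) n * fst (vconj \<phi>) (-n)
        + snd (R21 \<mu>p lp \<mu>m lm \<kappa> \<phi>) n * snd (vconj \<phi>) (-n)" for n
    have Teq: "T n = of_real (Q n / \<rho>r) * inverse (lam_sym \<kappa> n)" for n
    proof -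
      have "T n = (inverse (rho \<mu>p lp \<mu>m lm) * inverse (lam_sym \<kappa> n)) *
          (of_real ((dp+dm)/2) * fst \<phi> n - (\<i> * of_real g21) * of_real (hr n) * snd \<phi> n) * cnj (fst \<phi> n)
        + (inverse (rho \<mu>p lp \<mu>m lm) * inverse (lam_sym \<kappa> n)) *
          (of_real ((dp+dm)/2) * snd \<phi> n + (\<i> * of_real g21) * of_real (hr n) * fst \<phi> n) * cnj (snd \<phi> n)"
        unfolding T_def R21_comp vconj_def Dc Fc hc by (simp add: mult.assoc)
      also have "\<dots> = (inverse (rho \<mu>p lp \<mu>m lm) * inverse (lam_sym \<kappa> n)) * of_real (Q n)"
        unfolding Q_def S_def by (rule term_form) auto
      finally show ?thesis unfolding rho_eq by (simp add: divide_inverse mult_ac)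
    qed
    have Sge: "S n \<ge> 0" for n unfolding S_def by simp
    have Qb: "Q n \<le> - (e * S n)" "\<bar>Q n\<bar> \<le> (\<bar>(dp+dm)/2\<bar> + \<bar>g21\<bar>) * S n" for n
    proof -
      have ib: "\<bar>2 * Im (fst \<phi> n * cnj (snd \<phi> n))\<bar> \<le> S n" unfolding S_def by (rule im_bound)
      note qb = Q_bounds[OF hr[of n] ib, of "(dp+dm)/2" g21, folded Q_def]
      have "e * S n \<le> e21 * S n" unfolding e_def using Sge[of n] by (intro mult_right_mono) auto
      moreover have "(- ((dp+dm)/2) - \<bar>g21\<bar>) = e21" unfolding e21_def by linarith
      hence "(- ((dp+dm)/2) - \<bar>g21\<bar>) * S n = e21 * S n" by simp
      ultimately show "Q n \<le> - (e * S n)" using qb(1) by linarith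
      show "\<bar>Q n\<bar> \<le> (\<bar>(dp+dm)/2\<bar> + \<bar>g21\<bar>) * S n" using qb(2) .
    qed
    have P: "pairing (R21 \<mu>p lp \<mu>m lm \<kappa> \<phi>) (vconj \<phi>) = 2 * of_real pi * (\<Sum>\<^sub>\<infinity>n\<in>UNIV. T n)"
      unfolding pairing_def T_def ..
    have W1: "sob_weight (1/2) (fst \<phi>) summable_on UNIV" and W2: "sob_weight (1/2) (snd \<phi>) summable_on UNIV"
      using H unfolding inHv_def inH_def by auto
    have W1': "sob_weight (-1/2) (fst \<phi>) summable_on UNIV" and W2': "sob_weight (-1/2) (snd \<phi>) summable_on UNIV"
      using H weight_half_summable unfolding inHv_def inH_def by auto
    have Weq1: "sob_weight (1/2) (fst \<phi>) n + sob_weight (1/2) (snd \<phi>) n = mm n * S n" for n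
      unfolding sob_weight_mm mm_powr_1 S_def by (simp add: algebra_simps)
    have Weqm: "sob_weight (-1/2) (fst \<phi>) n + sob_weight (-1/2) (snd \<phi>) n = 1 / mm n * S n" for n
      unfolding sob_weight_mm mm_powr_m1 S_def by (simp add: algebra_simps)
    have mm0: "0 \<le> mm n" "0 \<le> 1 / mm n" for n using mm_ge1[of n] by simp_all
    have kb: "cmod (inverse (lam_sym \<kappa> n)) \<le> 1 / c * mm n" for n using cb[of n] by simp
    have L1: "Re (- (2 * of_real pi) * (\<Sum>\<^sub>\<infinity>n\<in>UNIV. T n)) \<ge> (e * (2 * pi * c) / \<rho>r) *
        ((\<Sum>\<^sub>\<infinity>n\<in>UNIV. sob_weight (1/2) (fst \<phi>) n) + (\<Sum>\<^sub>\<infinity>n\<in>UNIV. sob_weight (1/2) (snd \<phi>) n))"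
    proof (rule case_lemma[OF W1 W2 W1 W2 Weq1 Weq1 Teq r0 _ Qb(1) Qb(2) Sge mm0(1) _ _ kb])
      show "0 \<le> e" using e0 by simp
      show "0 \<le> 2 * pi * c" using c0 by simp
      fix n
      have "c * mm n \<le> Re (inverse (lam_sym \<kappa> n))" using cb[of n] by simp
      hence "2 * pi * (c * mm n) \<le> 2 * pi * Re (inverse (lam_sym \<kappa> n))" by (rule mult_left_mono) simp
      thus "Re (- (2 * of_real pi) * inverse (lam_sym \<kappa> n)) \<le> - (2 * pi * c * mm n)" by simp
    qed
    have L3: "Re (- (2 * of_real pi * \<i>) * (\<Sum>\<^sub>\<infinity>n\<in>UNIV. T n)) \<ge> (e * (2 * pi * c) / \<rho>r) *
        ((\<Sum>\<^sub>\<infinity>n\<in>UNIV. sob_weight (-1/2) (fst \<phi>) n) + (\<Sum>\<^sub>\<infinity>n\<in>UNIV. sob_weight (-1/2) (snd \<phi>) n))"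
    proof (rule case_lemma[OF W1' W2' W1 W2 Weqm Weq1 Teq r0 _ Qb(1) Qb(2) Sge mm0(2) _ _ kb])
      show "0 \<le> e" using e0 by simp
      show "0 \<le> 2 * pi * c" using c0 by simp
      fix n
      have "c / mm n \<le> - Im (inverse (lam_sym \<kappa> n))" using cb[of n] by simp
      hence "2 * pi * (c / mm n) \<le> 2 * pi * (- Im (inverse (lam_sym \<kappa> n)))" by (rule mult_left_mono) simp
      thus "Re (- (2 * of_real pi * \<i>) * inverse (lam_sym \<kappa> n)) \<le> - (2 * pi * c * (1 / mm n))" by simp
    qed
    show "- Re (pairing (R21 \<mu>p lp \<mu>m lm \<kappa> \<phi>) (vconj \<phi>)) \<ge> c1 * sob_vnorm2 (1/2) \<phi> \<and>
       Im (pairing (R21 \<mu>p lp \<mu>m lm \<kappa> \<phi>) (vconj \<phi>)) \<ge> c1 * sob_vnorm2 (-1/2) \<phi>"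
      using L1 L3 unfolding P c1_def sob_vnorm2_def sob_norm2_def by simp
  qed
  show ?thesis using P1 P2 c1p by blast
qed

end
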